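(* Fix positive definite diagonal matrices $\mathbf{G}_1,\dots,\mathbf{G}_g\in\mathbb{R}^{L\times L}$, a symmetric positive semidefinite matrix $\mathbf{S}\in\mathbb{R}^{gL\times gL}$ (playing the role of $\boldsymbol{\Sigma}+\boldsymbol{\mu}\boldsymbol{\mu}^T$), and a matrix $\mathbf{B}\in\mathbb{R}^{L\times L}$. For positive definite $\mathbf{B}_1,\dots,\mathbf{B}_g\in\mathbb{R}^{L\times L}$ let $\boldsymbol{\Sigma}_0=\operatorname{diag}\{\mathbf{G}_1\mathbf{B}_1\mathbf{G}_1,\dots,\mathbf{G}_g\mathbf{B}_g\mathbf{G}_g\}$ and $Q(\{\mathbf{B}_i\}_{i=1}^g,\{\mathbf{G}_i\}_{i=1}^g)=-\tfrac12\log\det\boldsymbol{\Sigma}_0-\tfrac12\operatorname{tr}(\boldsymbol{\Sigma}_0^{-1}\mathbf{S})$. Let $\zeta:\mathbb{R}^{L\times L}\to\mathbb{R}$ be a differentiable (explicit weak constraint) function and consider the problem $\min_{\{\mathbf{B}_i\}}Q(\{\mathbf{B}_i\},\{\mathbf{G}_i\})$ subject to $\zeta(\mathbf{B}_i)=\zeta(\mathbf{B})$ for all $i=1,\dots,g$. Suppose that, for given multipliers $\lambda_1^k,\dots,\lambda_g^k\in\mathbb{R}$, the point $\{\mathbf{B}_i^{k+1}\}_{i=1}^g$ is a stationary point of the Lagrange function, i.e. $\nabla_{\mathbf{B}_i}Q(\{\mathbf{B}_i^{k+1}\}_{i=1}^g,\{\mathbf{G}_i\}_{i=1}^g)-\lambda_i^k\nabla\zeta(\mathbf{B}_i^{k+1})=0$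 for all $i$. Then there exists a (hidden weak constraint) function $\psi:\mathbb{R}^{L\times L}\to\mathbb{R}$ such that $(\{\mathbf{B}_i^{k+1}\}_{i=1}^g,\{\lambda_i^k\}_{i=1}^g)$ is a KKT pair of the problem $\min_{\{\mathbf{B}_i\}}Q(\{\mathbf{B}_i\},\{\mathbf{G}_i\})$ subject to $\psi(\mathbf{B}_i)=\psi(\mathbf{B})$ for all $i=1,\dots,g$.
   Context: A KKT pair $(\{\mathbf{B}_i\},\{\lambda_i\})$ of the equality-constrained problem $\min Q$ s.t. $\psi(\mathbf{B}_i)=\psi(\mathbf{B})$, $i=1,\dots,g$, means: $\psi(\mathbf{B}_i)=\psi(\mathbf{B})$ for all $i$ (feasibility) and $\nabla_{\mathbf{B}_i}Q(\{\mathbf{B}_i\},\{\mathbf{G}_i\})-\lambda_i\nabla\psi(\mathbf{B}_i)=0$ for all $i$ (stationarity). Gradients are taken with respect to the matrix entries. *)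

theory Defs
  imports "HOL-Analysis.Analysis"
begin

text \<open>The inner product on this
  type is the Frobenius inner product (sum of products of entries), so GDERIV
  gives the gradient with respect to the matrix entries.\<close>

definition sym_mat :: "real^'n^'n \<Rightarrow> bool" where
  "sym_mat A \<longleftrightarrow> transpose A = A"

definition pos_def :: "real^'n^'n \<Rightarrow> bool" where
  "pos_def A \<longleftrightarrow> sym_mat A \<and> (\<forall>x. x \<noteq> 0 \<longrightarrow> x \<bullet> (A *v x) > 0)"

definition pos_semidef :: "real^'n^'n \<Rightarrow> bool" where
  "pos_semidef A \<longleftrightarrow> sym_mat A \<and> (\<forall>x. x \<bullet> (A *v x) \<ge> 0)"

definition diag_mat :: "real^'n^'n \<Rightarrow> bool" where
  "diag_mat A \<longleftrightarrow> (\<forall>i j. i \<noteq> j \<longrightarrow> A $ i $ j = 0)"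

definition Sigma0 :: "('g::finite \<Rightarrow> real^'L^'L) \<Rightarrow> ('g \<Rightarrow> real^'L^'L) \<Rightarrow> real^('g \<times> 'L)^('g \<times> 'L)" where
  "Sigma0 G Bs = (\<chi> p q. if fst p = fst q
       then (G (fst p) ** Bs (fst p) ** G (fst p)) $ snd p $ snd q else 0)"

definition Qfun :: "('g::finite \<Rightarrow> real^'L^'L) \<Rightarrow> real^('g \<times> 'L)^('g \<times> 'L) \<Rightarrow> ('g \<Rightarrow> real^'L^'L) \<Rightarrow> real" where
  "Qfun G S Bs = - (1/2) * ln (det (Sigma0 G Bs)) - (1/2) * trace (matrix_inv (Sigma0 G Bs) ** S)"

definition KKT_pair ::
  "('g::finite \<Rightarrow> real^'L^'L) \<Rightarrow> real^('g \<times> 'L)^('g \<times> 'L) \<Rightarrow> (real^'L^'L \<Rightarrow> real) \<Rightarrow> real^'L^'L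
     \<Rightarrow> ('g \<Rightarrow> real^'L^'L) \<Rightarrow> ('g \<Rightarrow> real) \<Rightarrow> bool" where
  "KKT_pair G S psi B Bs lam \<longleftrightarrow>
     (\<forall>i. psi (Bs i) = psi B) \<and>
     (\<forall>i. \<exists>DQ Dpsi. (GDERIV (\<lambda>X. Qfun G S (Bs(i := X))) (Bs i) :> DQ) \<and>
                   (GDERIV psi (Bs i) :> Dpsi) \<and> DQ - lam i *\<^sub>R Dpsi = 0)"

end

theory Submission
  imports Defs
begin

definition dd :: "'a::real_inner \<Rightarrow> 'a \<Rightarrow> real" where
  "dd q X = (X - q) \<bullet> (X - q)"

definition DD :: "'a::real_inner set \<Rightarrow> 'a \<Rightarrow> 'a \<Rightarrow> real" where
  "DD P p X = (\<Prod>q\<in>P-{p}. dd q X)"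

definition kk :: "'a::real_inner set \<Rightarrow> 'a \<Rightarrow> 'a \<Rightarrow> real" where
  "kk P p X = DD P p X / (DD P p X + dd p X)"

lemma dd_deriv: "(dd q has_derivative (\<lambda>h. 2 * ((X - q) \<bullet> h))) (at X)"
proof -
  have "((\<lambda>X. (X - q) \<bullet> (X - q)) has_derivative (\<lambda>h. (X - q) \<bullet> (h - 0) + (h - 0) \<bullet> (X - q))) (at X)"
    by (intro derivative_eq_intros) auto
  then show ?thesis unfolding dd_def[abs_def] by (simp add: inner_commute)
qed

lemma dd_nonneg: "dd q X \<ge> 0" unfolding dd_def by simp

lemma dd_pos: "X \<noteq> q \<Longrightarrow> dd q X > 0" unfolding dd_def by simp

lemma dd_self: "dd q q = 0" unfolding dd_def by simp

lemma DD_deriv: "\<exists>D'. (DD P p has_derivative D') (at X)"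
  unfolding DD_def[abs_def] by (rule exI, rule has_derivative_prod, rule dd_deriv)

lemma DD_nonneg: "DD P p X \<ge> 0" unfolding DD_def by (simp add: prod_nonneg dd_nonneg)

lemma DD_pos_self: "DD P p p > 0" unfolding DD_def by (rule prod_pos) (auto intro: dd_pos)

lemma DD_zero: assumes "finite P" "q \<in> P" "q \<noteq> p"
  shows "DD P p q = 0" "(DD P p has_derivative (\<lambda>h. 0)) (at q)"
proof -
  have eq: "DD P p X = dd q X * (\<Prod>r\<in>P-{p}-{q}. dd r X)" for X
    unfolding DD_def using assms by (subst prod.remove[of _ q]) auto
  show "DD P p q = 0" using eq[of q] by (simp add: dd_self)
  have "((\<lambda>X. dd q X * (\<Prod>r\<in>P-{p}-{q}. dd r X)) has_derivative
     (\<lambda>h. dd q q * (\<Sum>i\<in>P-{p}-{q}. 2 * ((q - i) \<bullet> h) * (\<Prod>j\<in>P-{p}-{q}-{i}. dd j q))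
         + 2 * ((q - q) \<bullet> h) * (\<Prod>r\<in>P-{p}-{q}. dd r q))) (at q)"
    by (intro has_derivative_mult dd_deriv has_derivative_prod)
  then show "(DD P p has_derivative (\<lambda>h. 0)) (at q)"
    unfolding eq[abs_def] by (simp add: dd_self)
qed

lemma den_pos: "DD P p X + dd p X > 0"
proof (cases "X = p")
  case True then show ?thesis using DD_pos_self[of P p] by (simp add: dd_self)
next
  case False then show ?thesis using DD_nonneg[of P p X] dd_pos[of X p] by simp
qed

lemma kk_deriv: "\<exists>D'. (kk P p has_derivative D') (at X)"
proof -
  obtain D' where D: "(DD P p has_derivative D') (at X)" using DD_deriv by blast
  have "(kk P p has_derivative (\<lambda>h. (D' h * (DD P p X + dd p X) - DD P p X * (D' h + 2 * ((X - p) \<bullet> h))) /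
        ((DD P p X + dd p X) * (DD P p X + dd p X)))) (at X)"
    unfolding kk_def[abs_def]
    by (rule has_derivative_divide'[OF D has_derivative_add[OF D dd_deriv]]) (use den_pos[of P p X] in simp)
  then show ?thesis by blast
qed

lemma kk_deriv_zero: assumes "finite P" "X \<in> P"
  shows "(kk P p has_derivative (\<lambda>h. 0)) (at X)"
proof (cases "X = p")
  case True
  obtain D' where D: "(DD P p has_derivative D') (at X)" using DD_deriv by blast
  have "(kk P p has_derivative (\<lambda>h. (D' h * (DD P p X + dd p X) - DD P p X * (D' h + 2 * ((X - p) \<bullet> h))) /
        ((DD P p X + dd p X) * (DD P p X + dd p X)))) (at X)"
    unfolding kk_def[abs_def]
    by (rule has_derivative_divide'[OF D has_derivative_add[OF D dd_deriv]]) (use den_pos[of P p X] in simp)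
  then show ?thesis using True by (simp add: dd_self algebra_simps)
next
  case False
  have D: "(DD P p has_derivative (\<lambda>h. 0)) (at X)" and z: "DD P p X = 0"
    using DD_zero[OF assms(1,2) False] by auto
  have "(kk P p has_derivative (\<lambda>h. ((0::real) * (DD P p X + dd p X) - DD P p X * (0 + 2 * ((X - p) \<bullet> h))) /
        ((DD P p X + dd p X) * (DD P p X + dd p X)))) (at X)"
    unfolding kk_def[abs_def]
    by (rule has_derivative_divide'[OF D has_derivative_add[OF D dd_deriv]]) (use den_pos[of P p X] in simp)
  then show ?thesis by (simp add: z)
qed

lemma kk_val: assumes "finite P" "X \<in> P"
  shows "kk P p X = (if X = p then 1 else 0)"
  using DD_pos_self[of P p] DD_zero(1)[OF assms] unfolding kk_def by (auto simp: dd_self)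

theorem proposition1:
  fixes G :: "'g::finite \<Rightarrow> real^'L^'L"
    and S :: "real^('g \<times> 'L)^('g \<times> 'L)"
    and B :: "real^'L^'L"
    and zeta :: "real^'L^'L \<Rightarrow> real"
    and Bk :: "'g \<Rightarrow> real^'L^'L"
    and lam :: "'g \<Rightarrow> real"
  assumes G_pd: "\<forall>i. pos_def (G i) \<and> diag_mat (G i)"
    and S_psd: "pos_semidef S"
    and zeta_diff: "\<forall>X. zeta differentiable (at X)"
    and Bk_pd: "\<forall>i. pos_def (Bk i)"
    and stationary: "\<forall>i. \<exists>DQ Dz. (GDERIV (\<lambda>X. Qfun G S (Bk(i := X))) (Bk i) :> DQ) \<and>
                          (GDERIV zeta (Bk i) :> Dz) \<and> DQ - lam i *\<^sub>R Dz = 0"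
  shows "\<exists>psi :: real^'L^'L \<Rightarrow> real. (\<forall>X. psi differentiable (at X)) \<and> KKT_pair G S psi B Bk lam"
proof -
  define P where "P = insert B (range Bk)"
  have fin: "finite P" unfolding P_def by simp
  define h where "h X = (\<Sum>p\<in>P. zeta p * kk P p X)" for X
  define psi where "psi X = zeta X - h X" for X
  have hval: "h X = zeta X" if "X \<in> P" for X
  proof -
    have "h X = (\<Sum>p\<in>P. if X = p then zeta p else 0)"
      unfolding h_def using kk_val[OF fin that] by (intro sum.cong) auto
    also have "\<dots> = zeta X" using fin that by (simp add: sum.delta)
    finally show ?thesis .
  qed
  have hder0: "(h has_derivative (\<lambda>x. 0)) (at X)" if "X \<in> P" for X
  proof -
    have "(h has_derivative (\<lambda>x. \<Sum>p\<in>P. zeta p * 0)) (at X)"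
      unfolding h_def[abs_def]
      by (intro has_derivative_sum has_derivative_mult_right kk_deriv_zero[OF fin that])
    then show ?thesis by simp
  qed
  have hdiff: "h differentiable (at X)" for X
  proof -
    have "\<forall>p. \<exists>D'. (kk P p has_derivative D') (at X)" using kk_deriv by blast
    then obtain D where "\<And>p. (kk P p has_derivative D p) (at X)" by metis
    then have "(h has_derivative (\<lambda>x. \<Sum>p\<in>P. zeta p * D p x)) (at X)"
      unfolding h_def[abs_def] by (intro has_derivative_sum has_derivative_mult_right)
    then show ?thesis unfolding differentiable_def by blast
  qed
  have psi0: "psi X = 0" if "X \<in> P" for X using hval[OF that] unfolding psi_def by simp
  show ?thesis
  proof (intro exI conjI allI)
    fix X show "psi differentiable (at X)"
      unfolding psi_def[abs_def] using zeta_diff hdiff by (intro differentiable_diff) auto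
  next
    show "KKT_pair G S psi B Bk lam"
      unfolding KKT_pair_def
    proof (intro conjI allI)
      fix i
      show "psi (Bk i) = psi B" using psi0 unfolding P_def by auto
      from stationary obtain DQ Dz where a: "GDERIV (\<lambda>X. Qfun G S (Bk(i := X))) (Bk i) :> DQ"
        and b: "GDERIV zeta (Bk i) :> Dz" and c: "DQ - lam i *\<^sub>R Dz = 0" by blast
      have "((\<lambda>X. zeta X - h X) has_derivative (\<lambda>x. x \<bullet> Dz - 0)) (at (Bk i))"
        using b hder0[of "Bk i"] unfolding gderiv_def P_def
        by (intro has_derivative_diff) auto
      then have "GDERIV psi (Bk i) :> Dz" unfolding gderiv_def psi_def[abs_def] by simp
      then show "\<exists>DQ Dpsi. (GDERIV (\<lambda>X. Qfun G S (Bk(i := X))) (Bk i) :> DQ) \<and>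
                   (GDERIV psi (Bk i) :> Dpsi) \<and> DQ - lam i *\<^sub>R Dpsi = 0"
        using a c by blast
    qed
  qed
qed

end
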